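(* Let $B\ge 2$ and $G\ge 2$ be even integers. If $\min(B,G)\le 4$, then there is no balanced matrix $X\in\{-1,1\}^{G\times B}$ without collisions. If $B=G=6$ or $B=G=8$, then there exists a balanced matrix $X\in\{-1,1\}^{G\times B}$ without collisions.
   Context: Two vectors $v_1,v_2\in\{-1,1\}^k$ have a collision if $v_1=v_2$ or $v_1=-v_2$. A matrix $X\in\{-1,1\}^{n\times p}$ has no collisions if no two distinct rows of $X$ have a collision and no two distinct columns of $X$ have a collision. A matrix $X\in\{-1,1\}^{n\times p}$ is balanced if each of its rows sums to $0$ and each of its columns sums to $0$. *)

theory Defs
  imports Main
begin

text \<open>A matrix X in {-1,1}^(n x p) is represented as a function nat => nat => int,
  with rows indexed by 0..<n and columns by 0..<p; values outside are irrelevant.\<close>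

definition pm1_matrix :: "nat \<Rightarrow> nat \<Rightarrow> (nat \<Rightarrow> nat \<Rightarrow> int) \<Rightarrow> bool" where
  "pm1_matrix n p X \<longleftrightarrow> (\<forall>i<n. \<forall>j<p. X i j = 1 \<or> X i j = -1)"

definition collision :: "nat \<Rightarrow> (nat \<Rightarrow> int) \<Rightarrow> (nat \<Rightarrow> int) \<Rightarrow> bool" where
  "collision k v1 v2 \<longleftrightarrow> (\<forall>t<k. v1 t = v2 t) \<or> (\<forall>t<k. v1 t = - v2 t)"

definition no_collisions :: "nat \<Rightarrow> nat \<Rightarrow> (nat \<Rightarrow> nat \<Rightarrow> int) \<Rightarrow> bool" where
  "no_collisions n p X \<longleftrightarrow>
     (\<forall>i<n. \<forall>i'<n. i \<noteq> i' \<longrightarrow> \<not> collision p (\<lambda>j. X i j) (\<lambda>j. X i' j)) \<and>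
     (\<forall>j<p. \<forall>j'<p. j \<noteq> j' \<longrightarrow> \<not> collision n (\<lambda>i. X i j) (\<lambda>i. X i j'))"

definition balanced :: "nat \<Rightarrow> nat \<Rightarrow> (nat \<Rightarrow> nat \<Rightarrow> int) \<Rightarrow> bool" where
  "balanced n p X \<longleftrightarrow>
     (\<forall>i<n. (\<Sum>j<p. X i j) = 0) \<and> (\<forall>j<p. (\<Sum>i<n. X i j) = 0)"

end

theory Submission
  imports Defs
begin

lemma allS: "(\<forall>i<Suc n. P i) = (P n \<and> (\<forall>i<n. P i))"
  by (auto simp: less_Suc_eq)

lemma all0: "(\<forall>i<(0::nat). P i) = True" by simp

lemma pm_vals: "(x::int) = 1 \<or> x = -1 \<Longrightarrow> x * x = 1" by auto

lemma row4:
  fixes u v :: "nat \<Rightarrow> int"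
  assumes "\<forall>t<4. u t = 1 \<or> u t = -1" "\<forall>t<4. v t = 1 \<or> v t = -1"
    "(\<Sum>t<4. u t) = 0" "(\<Sum>t<4. v t) = 0"
    "u 0 * u 1 = v 0 * v 1" "u 0 * u 2 = v 0 * v 2"
  shows "collision 4 u v"
proof -
  have u: "u 0 = 1 \<or> u 0 = -1" "u 1 = 1 \<or> u 1 = -1" "u 2 = 1 \<or> u 2 = -1" "u 3 = 1 \<or> u 3 = -1"
    using assms(1) by auto
  have v: "v 0 = 1 \<or> v 0 = -1" "v 1 = 1 \<or> v 1 = -1" "v 2 = 1 \<or> v 2 = -1" "v 3 = 1 \<or> v 3 = -1"
    using assms(2) by auto
  have su: "u 0 + u 1 + u 2 + u 3 = 0" using assms(3) by (simp add: numeral_eq_Suc)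
  have sv: "v 0 + v 1 + v 2 + v 3 = 0" using assms(4) by (simp add: numeral_eq_Suc)
  have "(u 0 = v 0 \<and> u 1 = v 1 \<and> u 2 = v 2 \<and> u 3 = v 3) \<or>
        (u 0 = - v 0 \<and> u 1 = - v 1 \<and> u 2 = - v 2 \<and> u 3 = - v 3)"
    using u v su sv assms(5,6) by (elim disjE; simp)
  then show ?thesis unfolding collision_def
    by (auto simp: numeral_eq_Suc allS)
qed

lemma key_range:
  fixes u :: "nat \<Rightarrow> int"
  assumes "\<forall>t<4. u t = 1 \<or> u t = -1" "(\<Sum>t<4. u t) = 0"
  shows "(u 0 * u 1, u 0 * u 2) \<in> {(1,-1),(-1,1),(-1,-1)}"
proof -
  have u: "u 0 = 1 \<or> u 0 = -1" "u 1 = 1 \<or> u 1 = -1" "u 2 = 1 \<or> u 2 = -1" "u 3 = 1 \<or> u 3 = -1"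
    using assms(1) by auto
  have su: "u 0 + u 1 + u 2 + u 3 = 0" using assms(2) by (simp add: numeral_eq_Suc)
  show ?thesis using u su by (elim disjE; simp)
qed

lemma main_lem:
  assumes pm: "pm1_matrix n p X" and bal: "balanced n p X" and nc: "no_collisions n p X"
    and n2: "n \<ge> 2"
  shows "p \<noteq> 2 \<and> (p = 4 \<longrightarrow> n < 4)"
proof
  show "p \<noteq> 2"
  proof
    assume p: "p = 2"
    have a: "X 0 0 = 1 \<or> X 0 0 = -1" "X 0 1 = 1 \<or> X 0 1 = -1"
      "X 1 0 = 1 \<or> X 1 0 = -1" "X 1 1 = 1 \<or> X 1 1 = -1"
      using pm n2 p unfolding pm1_matrix_def by auto
    have s: "X 0 0 + X 0 1 = 0" "X 1 0 + X 1 1 = 0"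
      using bal n2 p unfolding balanced_def by (auto simp: numeral_eq_Suc)
    have "collision 2 (\<lambda>j. X 0 j) (\<lambda>j. X 1 j)"
      using a s unfolding collision_def by (auto simp: numeral_eq_Suc allS)
    then show False using nc n2 p unfolding no_collisions_def by auto
  qed
next
  show "p = 4 \<longrightarrow> n < 4"
  proof
    assume p: "p = 4"
    show "n < 4"
    proof (rule ccontr)
      assume "\<not> n < 4"
      define k where "k i = (X i 0 * X i 1, X i 0 * X i 2)" for i
      have kr: "k ` {..<4} \<subseteq> {(1,-1),(-1,1),(-1,-1)}"
      proof
        fix y assume "y \<in> k ` {..<4}"
        then obtain i where i: "i < 4" "y = k i" by auto
        show "y \<in> {(1,-1),(-1,1),(-1,-1)}"
          unfolding i k_def
          apply (rule key_range)
          using pm bal i p \<open>\<not> n < 4\<close> unfolding pm1_matrix_def balanced_def by auto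
      qed
      have "card (k ` {..<4}) \<le> 3"
        using card_mono[OF _ kr] by (simp add: card_insert_if)
      then have "\<not> inj_on k {..<4}" using card_image by fastforce
      then obtain i i' where ii: "i < 4" "i' < 4" "i \<noteq> i'" "k i = k i'"
        unfolding inj_on_def by auto
      have "collision 4 (\<lambda>j. X i j) (\<lambda>j. X i' j)"
        apply (rule row4)
        using pm bal ii p \<open>\<not> n < 4\<close> unfolding pm1_matrix_def balanced_def k_def by auto
      then show False using nc ii p \<open>\<not> n < 4\<close> unfolding no_collisions_def by auto
    qed
  qed
qed

lemma transp:
  assumes "pm1_matrix n p X" "balanced n p X" "no_collisions n p X"
  shows "pm1_matrix p n (\<lambda>i j. X j i) \<and> balanced p n (\<lambda>i j. X j i) \<and> no_collisions p n (\<lambda>i j. X j i)"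
  using assms unfolding pm1_matrix_def balanced_def no_collisions_def by auto

lemma all_lt_list: "(\<forall>i<(n::nat). P i) = list_all P [0..<n]"
  by (auto simp: list_all_iff)

definition M6 :: "int list list" where
 "M6 = [[1, 1, 1, -1, -1, -1], [-1, 1, -1, 1, 1, -1], [1, 1, -1, -1, -1, 1], [-1, -1, 1, -1, 1, 1], [-1, -1, 1, 1, -1, 1], [1, -1, -1, 1, 1, -1]]"

definition M8 :: "int list list" where
 "M8 = [[1, 1, -1, 1, -1, 1, -1, -1], [-1, 1, 1, -1, -1, -1, 1, 1], [1, 1, 1, -1, -1, -1, 1, -1], [-1, -1, 1, 1, -1, 1, 1, -1], [1, -1, -1, -1, 1, -1, 1, 1], [-1, -1, 1, 1, 1, 1, -1, -1], [-1, 1, -1, -1, 1, 1, -1, 1], [1, -1, -1, 1, 1, -1, -1, 1]]"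

lemma ex6: "\<exists>X. pm1_matrix 6 6 X \<and> balanced 6 6 X \<and> no_collisions 6 6 X"
  apply (rule exI[of _ "\<lambda>i j. M6 ! i ! j"])
  unfolding pm1_matrix_def balanced_def no_collisions_def collision_def M6_def
  unfolding all_lt_list lessThan_atLeast0 atLeastLessThan_upt
  by code_simp

lemma ex8: "\<exists>X. pm1_matrix 8 8 X \<and> balanced 8 8 X \<and> no_collisions 8 8 X"
  apply (rule exI[of _ "\<lambda>i j. M8 ! i ! j"])
  unfolding pm1_matrix_def balanced_def no_collisions_def collision_def M8_def
  unfolding all_lt_list lessThan_atLeast0 atLeastLessThan_upt
  by code_simp

theorem theorem2:
  fixes B G :: nat
  assumes "B \<ge> 2" and "G \<ge> 2" and "even B" and "even G"
  shows "(min B G \<le> 4 \<longrightarrow>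
            \<not> (\<exists>X. pm1_matrix G B X \<and> balanced G B X \<and> no_collisions G B X)) \<and>
         ((B = 6 \<and> G = 6) \<or> (B = 8 \<and> G = 8) \<longrightarrow>
            (\<exists>X. pm1_matrix G B X \<and> balanced G B X \<and> no_collisions G B X))"
proof
  show "min B G \<le> 4 \<longrightarrow>
            \<not> (\<exists>X. pm1_matrix G B X \<and> balanced G B X \<and> no_collisions G B X)"
  proof (intro impI notI)
    assume m: "min B G \<le> 4"
    assume "\<exists>X. pm1_matrix G B X \<and> balanced G B X \<and> no_collisions G B X"
    then obtain X where X: "pm1_matrix G B X" "balanced G B X" "no_collisions G B X" by blast
    have a: "B \<noteq> 2 \<and> (B = 4 \<longrightarrow> G < 4)" using main_lem[OF X assms(2)] .
    have b: "G \<noteq> 2 \<and> (G = 4 \<longrightarrow> B < 4)"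
      using transp[OF X] main_lem assms(1) by blast
    have "B = 2 \<or> B = 4 \<or> G = 2 \<or> G = 4" using m assms by (auto simp: min_def; presburger)
    moreover have "G = 2 \<or> G \<ge> 4" "B = 2 \<or> B \<ge> 4" using assms by presburger+
    ultimately show False using a b by auto
  qed
next
  show "(B = 6 \<and> G = 6) \<or> (B = 8 \<and> G = 8) \<longrightarrow>
            (\<exists>X. pm1_matrix G B X \<and> balanced G B X \<and> no_collisions G B X)"
    using ex6 ex8 by auto
qed

end
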